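(* In the iAPG setting described in the context, assume $\mu>0$ and $\varepsilon_k=0$ for all $k\ge0$; let $\kappa=\frac{L_g}{\gamma_{\mathrm{dec}}\mu}$ and $C_L=\frac{L_g+L_h}{\sqrt{\underline L}}+\sqrt{\frac{L_g+L_h}{\gamma_{\mathrm{dec}}}}$. Suppose that for each $k\ge0$ a step $\tilde\eta_k$ with $\frac{\gamma_{\mathrm{dec}}}{L_g+L_h}<\tilde\eta_k\le\frac1{\underline L}$ is given and $\tilde x^{(k)}=\mathrm{prox}_{\tilde\eta_k r}\big(x^{(k)}-\tilde\eta_k(\nabla g(x^{(k)})+\nabla h(x^{(k)}))\big)$ satisfies $g(\tilde x^{(k)})+h(\tilde x^{(k)})\le g(x^{(k)})+h(x^{(k)})+\langle\nabla g(x^{(k)})+\nabla h(x^{(k)}),\tilde x^{(k)}-x^{(k)}\rangle+\frac1{2\tilde\eta_k}\|\tilde x^{(k)}-x^{(k)}\|^2$. Then for all $k\ge0$, $$\mathrm{dist}\big(0,\partial F(\tilde x^{(k)})\big)\le C_L\sqrt{2\Big(F(x^{(0)})-F^*+\frac{\gamma_0}{2}\|x^*-z^{(0)}\|^2\Big)}\Big(1-\sqrt{1/\kappa}\Big)^{k/2}.$$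
   Context: iAPG setting. Let $g,h:\mathbb R^n\to\mathbb R$ and $r:\mathbb R^n\to\mathbb R\cup\{+\infty\}$, where $g$ is convex, $\mu$-strongly convex for some $\mu\ge0$, and differentiable with $L_g$-Lipschitz gradient ($L_g>0$); $h$ is convex and differentiable with $L_h$-Lipschitz gradient; $r$ is proper, closed and convex. Put $H=h+r$, $F=g+H$, and assume $F$ attains its minimum value $F^*$ at some point $x^*$. Fix constants $\gamma_{\mathrm{dec}}\in(0,1)$ and $\underline L>0$ with $\mu\le\underline L\le L_g$. We consider points $x^{(k)},z^{(k)},y^{(k)}\in\mathbb R^n$ and scalars $\eta_k>0,\alpha_k>0,\gamma_k>0,\varepsilon_k\ge0$ ($k\ge0$) such that $x^{(0)}=z^{(0)}\in\mathrm{dom}(H)$, $\gamma_0\ge\mu$, and for every $k\ge0$: (i) $\gamma_{\mathrm{dec}}/L_g<\eta_k\le1/\underline L$; (ii) $\gamma_{k+1}=\alpha_k^2/\eta_k=(1-\alpha_k)\gamma_k+\alpha_k\mu$; (iii) $y^{(k)}=\frac{1}{\alpha_k\gamma_k+\gamma_{k+1}}\big(\alpha_k\gamma_k z^{(k)}+\gamma_{k+1}x^{(k)}\big)$; (iv) $\mathrm{dist}\big(0,\ \nabla g(y^{(k)})+\tfrac1{\eta_k}(x^{(k+1)}-y^{(k)})+\partial H(x^{(k+1)})\big)\le\varepsilon_k$; (v) $g(x^{(k+1)})\le g(y^{(k)})+\langle\nabla g(y^{(k)}),x^{(k+1)}-y^{(k)}\rangle+\frac1{2\eta_k}\|x^{(k+1)}-y^{(k)}\|^2$;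 (vi) $z^{(k+1)}=x^{(k)}+\frac1{\alpha_k}(x^{(k+1)}-x^{(k)})$. Here $\partial$ denotes the convex subdifferential and $\mathrm{dist}(0,S)=\inf_{s\in S}\|s\|$. $\mathrm{prox}_{\eta r}(v)=\arg\min_u\{\frac12\|u-v\|^2+\eta r(u)\}$. *)

theory Defs
  imports "HOL-Analysis.Analysis"
begin

definition proper_fun :: "('a \<Rightarrow> ereal) \<Rightarrow> bool" where
  "proper_fun f \<longleftrightarrow> (\<forall>x. f x \<noteq> -\<infinity>) \<and> (\<exists>x. f x \<noteq> \<infinity>)"

definition epigraph :: "('a \<Rightarrow> ereal) \<Rightarrow> ('a \<times> real) set" where
  "epigraph f = {(x, t). f x \<le> ereal t}"

definition closed_fun :: "('a::topological_space \<Rightarrow> ereal) \<Rightarrow> bool" where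
  "closed_fun f \<longleftrightarrow> closed (epigraph f)"

definition convex_fun :: "('a::real_vector \<Rightarrow> ereal) \<Rightarrow> bool" where
  "convex_fun f \<longleftrightarrow> convex (epigraph f)"

definition strongly_convex :: "real \<Rightarrow> ('a::real_normed_vector \<Rightarrow> real) \<Rightarrow> bool" where
  "strongly_convex \<mu> f \<longleftrightarrow> (\<forall>x y u. 0 \<le> u \<and> u \<le> 1 \<longrightarrow>
      f ((1 - u) *\<^sub>R x + u *\<^sub>R y) \<le> (1 - u) * f x + u * f y - \<mu> / 2 * u * (1 - u) * (norm (x - y))\<^sup>2)"

definition subdiff :: "('a::real_inner \<Rightarrow> ereal) \<Rightarrow> 'a \<Rightarrow> 'a set" where
  "subdiff f x = {v. \<bar>f x\<bar> \<noteq> \<infinity> \<and> (\<forall>y. f x + ereal (v \<bullet> (y - x)) \<le> f y)}"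

text \<open>dist(0,S) = inf over s in S of norm s, as an extended real (= +infinity for empty S).\<close>
definition dist0 :: "'a::real_normed_vector set \<Rightarrow> ereal" where
  "dist0 S = (INF s\<in>S. ereal (norm s))"

definition is_prox :: "real \<Rightarrow> ('a::real_normed_vector \<Rightarrow> ereal) \<Rightarrow> 'a \<Rightarrow> 'a \<Rightarrow> bool" where
  "is_prox \<eta> r v p \<longleftrightarrow> (\<forall>u. ereal (1/2 * (norm (p - v))\<^sup>2) + ereal \<eta> * r p
                              \<le> ereal (1/2 * (norm (u - v))\<^sup>2) + ereal \<eta> * r u)"

end

theory Submission
  imports Defs
begin



lemma tangent_le:
  fixes f :: "'a::real_inner \<Rightarrow> real"
  assumes fd: "(f has_derivative (\<lambda>d. D \<bullet> d)) (at y)"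
    and le: "\<And>t. 0<t \<Longrightarrow> t\<le>1 \<Longrightarrow> f (y + t *\<^sub>R d) \<le> f y + t*c + t^2*K"
  shows "D \<bullet> d \<le> c"
proof -
  let ?p = "\<lambda>t::real. f (y + t *\<^sub>R d)"
  have l: "((\<lambda>t. y + t *\<^sub>R d) has_derivative (\<lambda>t. t *\<^sub>R d)) (at 0)"
    by (auto intro!: derivative_eq_intros)
  have "(?p has_derivative (\<lambda>t. D \<bullet> (t *\<^sub>R d))) (at 0)"
    using has_derivative_compose[OF l, of f "\<lambda>d. D \<bullet> d"] fd by simp
  hence "(?p has_field_derivative (D \<bullet> d)) (at 0)"
    by (simp add: has_field_derivative_def mult.commute[of _ "D \<bullet> d"])
  hence "((\<lambda>t. (?p (0 + t) - ?p 0) / t) \<longlongrightarrow> D \<bullet> d) (at 0)"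
    by (simp add: DERIV_def)
  hence t1: "((\<lambda>t. (?p t - ?p 0) / t) \<longlongrightarrow> D \<bullet> d) (at_right 0)"
    by (auto intro: tendsto_mono at_within_le_at)
  have t2: "((\<lambda>t. c + t * K) \<longlongrightarrow> c) (at_right (0::real))"
    by (auto intro!: tendsto_eq_intros)
  have ev: "eventually (\<lambda>t. (?p t - ?p 0) / t \<le> c + t * K) (at_right (0::real))"
  proof -
    have "eventually (\<lambda>t. t < 1) (at_right (0::real))"
      unfolding eventually_at_right_field by (rule exI[of _ 1]) auto
    moreover have "eventually (\<lambda>t. t > 0) (at_right (0::real))"
      by (simp add: eventually_at_right_less)
    ultimately show ?thesis
    proof eventually_elim
      case (elim t)
      have "?p t - ?p 0 \<le> t * (c + t*K)" using le[of t] elim by (simp add: power2_eq_square algebra_simps)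
      thus ?case using elim by (simp add: divide_le_eq mult.commute)
    qed
  qed
  show ?thesis using tendsto_le[OF _ t2 t1 ev] by simp
qed



lemma sq_comb_le:
  fixes u v :: "'a::real_inner"
  assumes "p \<ge> 0" "q \<ge> 0"
  shows "(norm (p *\<^sub>R u + q *\<^sub>R v))\<^sup>2 \<le> (p+q) * (p * (norm u)\<^sup>2 + q * (norm v)\<^sup>2)"
proof -
  have "norm (p *\<^sub>R u + q *\<^sub>R v) \<le> p * norm u + q * norm v"
    using norm_triangle_ineq[of "p *\<^sub>R u" "q *\<^sub>R v"] assms by simp
  hence "(norm (p *\<^sub>R u + q *\<^sub>R v))\<^sup>2 \<le> (p * norm u + q * norm v)\<^sup>2"
    by (simp add: power_mono)
  also have "\<dots> \<le> (p+q) * (p * (norm u)\<^sup>2 + q * (norm v)\<^sup>2)"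
  proof -
    have "(p+q) * (p * (norm u)\<^sup>2 + q * (norm v)\<^sup>2) - (p * norm u + q * norm v)\<^sup>2
        = p*q*(norm u - norm v)\<^sup>2" by (simp add: power2_eq_square algebra_simps)
    moreover have "p*q*(norm u - norm v)\<^sup>2 \<ge> 0" using assms by simp
    ultimately show ?thesis by linarith
  qed
  finally show ?thesis .
qed

lemma lyap_alg:
  fixes x z y x' xs z' :: "'a::real_inner"
  assumes eta: "\<eta>>0" and al: "0<\<alpha>" "\<alpha>\<le>1" and ga: "\<gamma>>0" and mu: "\<mu>\<ge>0"
    and g1: "\<gamma>' = \<alpha>\<^sup>2/\<eta>" and g2: "\<gamma>' = (1-\<alpha>)*\<gamma> + \<alpha>*\<mu>"
    and yd: "y = (1/(\<alpha>*\<gamma>+\<gamma>')) *\<^sub>R ((\<alpha>*\<gamma>) *\<^sub>R z + \<gamma>' *\<^sub>R x)"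
    and zd: "z' = x + (1/\<alpha>) *\<^sub>R (x' - x)"
  shows "(1-\<alpha>)*((1/\<eta>)*((x'-y) \<bullet> (x-y)) - 1/(2*\<eta>)*(norm(x'-y))\<^sup>2 - \<mu>/2*(norm(x-y))\<^sup>2)
       + \<alpha>*((1/\<eta>)*((x'-y) \<bullet> (xs-y)) - 1/(2*\<eta>)*(norm(x'-y))\<^sup>2 - \<mu>/2*(norm(xs-y))\<^sup>2)
       \<le> (1-\<alpha>)*\<gamma>/2*(norm(xs-z))\<^sup>2 - \<gamma>'/2*(norm(xs-z'))\<^sup>2"
proof -
  define w where "w = (1-\<alpha>) *\<^sub>R x + \<alpha> *\<^sub>R xs - y"
  define a where "a = x' - y"
  have etag: "\<eta> * \<gamma>' = \<alpha>\<^sup>2" using g1 eta by simp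
  have c_eq: "\<alpha>*\<gamma>+\<gamma>' = \<alpha>*(\<alpha>+\<eta>*\<gamma>)/\<eta>" using g1 eta by (simp add: field_simps power2_eq_square)
  have cpos: "\<alpha>+\<eta>*\<gamma> > 0" using eta al ga by (simp add: add_pos_pos)
  have s1: "(\<alpha>+\<eta>*\<gamma>) *\<^sub>R y = (\<eta>*\<gamma>) *\<^sub>R z + \<alpha> *\<^sub>R x"
  proof -
    have "(\<alpha>+\<eta>*\<gamma>) *\<^sub>R y = ((\<alpha>+\<eta>*\<gamma>) * (1/(\<alpha>*\<gamma>+\<gamma>'))) *\<^sub>R ((\<alpha>*\<gamma>) *\<^sub>R z + \<gamma>' *\<^sub>R x)"
      by (simp add: yd)
    also have "(\<alpha>+\<eta>*\<gamma>) * (1/(\<alpha>*\<gamma>+\<gamma>')) = \<eta>/\<alpha>" using c_eq cpos al eta by simp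
    also have "(\<eta>/\<alpha>) *\<^sub>R ((\<alpha>*\<gamma>) *\<^sub>R z + \<gamma>' *\<^sub>R x) = (\<eta>*\<gamma>) *\<^sub>R z + ((\<eta>/\<alpha>)*\<gamma>') *\<^sub>R x"
      using al by (simp add: scaleR_add_right)
    also have "(\<eta>/\<alpha>)*\<gamma>' = \<alpha>" using etag al by (simp add: power2_eq_square field_simps)
    finally show ?thesis .
  qed
  have hmu: "\<eta>*\<alpha>*\<mu> = \<alpha>\<^sup>2 - \<eta>*(1-\<alpha>)*\<gamma>" using etag g2 by (simp add: algebra_simps)
  have s2: "\<alpha> *\<^sub>R w = \<eta> *\<^sub>R (((1-\<alpha>)*\<gamma>) *\<^sub>R (xs - z) + (\<alpha>*\<mu>) *\<^sub>R (xs - y))"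
  proof -
    have "\<alpha> *\<^sub>R w - \<eta> *\<^sub>R (((1-\<alpha>)*\<gamma>) *\<^sub>R (xs - z) + (\<alpha>*\<mu>) *\<^sub>R (xs - y))
       = (\<alpha>*(1-\<alpha>)) *\<^sub>R x + (\<eta>*(1-\<alpha>)*\<gamma>) *\<^sub>R z + (\<alpha>\<^sup>2 - \<eta>*((1-\<alpha>)*\<gamma> + \<alpha>*\<mu>)) *\<^sub>R xs
         + (\<eta>*\<alpha>*\<mu> - \<alpha>) *\<^sub>R y"
      by (simp add: w_def algebra_simps power2_eq_square)
    also have "\<alpha>\<^sup>2 - \<eta>*((1-\<alpha>)*\<gamma> + \<alpha>*\<mu>) = 0" using etag g2 by simp
    also have "\<eta>*\<alpha>*\<mu> - \<alpha> = -((1-\<alpha>)*(\<alpha>+\<eta>*\<gamma>))" using hmu by (simp add: power2_eq_square algebra_simps)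
    also have "(\<alpha>*(1-\<alpha>)) *\<^sub>R x + (\<eta>*(1-\<alpha>)*\<gamma>) *\<^sub>R z + 0 *\<^sub>R xs + (-((1-\<alpha>)*(\<alpha>+\<eta>*\<gamma>))) *\<^sub>R y
        = (1-\<alpha>) *\<^sub>R ((\<eta>*\<gamma>) *\<^sub>R z + \<alpha> *\<^sub>R x - (\<alpha>+\<eta>*\<gamma>) *\<^sub>R y)"
      by (simp add: algebra_simps)
    also have "\<dots> = 0" using s1 by simp
    finally show ?thesis by simp
  qed
  have p0: "(1-\<alpha>)*\<gamma> \<ge> 0" using al ga by simp
  have q0: "\<alpha>*\<mu> \<ge> 0" using al mu by simp
  have s4: "(norm w)\<^sup>2 \<le> \<eta> * ((1-\<alpha>)*\<gamma>*(norm (xs-z))\<^sup>2 + \<alpha>*\<mu>*(norm (xs-y))\<^sup>2)"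
  proof -
    have "\<alpha>\<^sup>2 * (norm w)\<^sup>2 = (norm (\<alpha> *\<^sub>R w))\<^sup>2" using al by (simp add: power_mult_distrib)
    also have "\<dots> = \<eta>\<^sup>2 * (norm (((1-\<alpha>)*\<gamma>) *\<^sub>R (xs - z) + (\<alpha>*\<mu>) *\<^sub>R (xs - y)))\<^sup>2"
      using s2 eta by (simp add: power_mult_distrib)
    also have "\<dots> \<le> \<eta>\<^sup>2 * (((1-\<alpha>)*\<gamma> + \<alpha>*\<mu>) * ((1-\<alpha>)*\<gamma>*(norm (xs-z))\<^sup>2 + \<alpha>*\<mu>*(norm (xs-y))\<^sup>2))"
      using sq_comb_le[OF p0 q0, of "xs - z" "xs - y"] by (simp add: mult_left_mono)
    also have "\<dots> = \<alpha>\<^sup>2 * (\<eta> * ((1-\<alpha>)*\<gamma>*(norm (xs-z))\<^sup>2 + \<alpha>*\<mu>*(norm (xs-y))\<^sup>2))"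
    proof -
      have e: "\<eta>*((1-\<alpha>)*\<gamma> + \<alpha>*\<mu>) = \<alpha>\<^sup>2" using etag g2 by simp
      have "\<eta>\<^sup>2 * (((1-\<alpha>)*\<gamma> + \<alpha>*\<mu>) * T) = (\<eta>*((1-\<alpha>)*\<gamma> + \<alpha>*\<mu>)) * (\<eta> * T)" for T
        by (simp add: power2_eq_square)
      thus ?thesis using e by simp
    qed
    finally show ?thesis using al by simp
  qed
  have s5: "w - a = \<alpha> *\<^sub>R (xs - z')"
  proof -
    have "\<alpha> *\<^sub>R z' = \<alpha> *\<^sub>R x + (x' - x)" using al zd by (simp add: scaleR_add_right)
    thus ?thesis unfolding w_def a_def by (simp add: algebra_simps)
  qed
  have s6: "2 * (a \<bullet> w) - (norm a)\<^sup>2 = (norm w)\<^sup>2 - (norm (w - a))\<^sup>2"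
    by (simp add: power2_norm_eq_inner inner_diff_left inner_diff_right inner_commute)
  have s7: "(norm (w - a))\<^sup>2 = \<alpha>\<^sup>2 * (norm (xs - z'))\<^sup>2"
    using s5 al by (simp add: power_mult_distrib)
  have wsplit: "w = (1-\<alpha>) *\<^sub>R (x - y) + \<alpha> *\<^sub>R (xs - y)" unfolding w_def by (simp add: algebra_simps)
  have lhs: "(1-\<alpha>)*((1/\<eta>)*((x'-y) \<bullet> (x-y)) - 1/(2*\<eta>)*(norm(x'-y))\<^sup>2 - \<mu>/2*(norm(x-y))\<^sup>2)
       + \<alpha>*((1/\<eta>)*((x'-y) \<bullet> (xs-y)) - 1/(2*\<eta>)*(norm(x'-y))\<^sup>2 - \<mu>/2*(norm(xs-y))\<^sup>2)
     = (1/(2*\<eta>)) * (2 * (a \<bullet> w) - (norm a)\<^sup>2) - (1-\<alpha>)*\<mu>/2*(norm(x-y))\<^sup>2 - \<alpha>*\<mu>/2*(norm(xs-y))\<^sup>2"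
  proof -
    have ip: "a \<bullet> w = (1-\<alpha>)*((x'-y) \<bullet> (x-y)) + \<alpha>*((x'-y) \<bullet> (xs-y))"
      by (simp only: wsplit a_def inner_add_right inner_scaleR_right)
    show ?thesis unfolding ip using eta by (simp add: a_def field_simps)
  qed
  have d0: "(1-\<alpha>)*\<mu>/2*(norm(x-y))\<^sup>2 \<ge> 0" using al mu by simp
  have "(1/(2*\<eta>)) * (2 * (a \<bullet> w) - (norm a)\<^sup>2) = (1/(2*\<eta>)) * (norm w)\<^sup>2 - \<gamma>'/2 * (norm (xs - z'))\<^sup>2"
    using s6 s7 etag eta by (simp add: field_simps mult.assoc[symmetric])
  moreover have "(1/(2*\<eta>)) * (norm w)\<^sup>2 \<le> (1-\<alpha>)*\<gamma>/2*(norm (xs-z))\<^sup>2 + \<alpha>*\<mu>/2*(norm (xs-y))\<^sup>2"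
  proof -
    have "(1/(2*\<eta>)) * (norm w)\<^sup>2 \<le> (1/(2*\<eta>)) * (\<eta> * ((1-\<alpha>)*\<gamma>*(norm (xs-z))\<^sup>2 + \<alpha>*\<mu>*(norm (xs-y))\<^sup>2))"
      using s4 eta by (intro mult_left_mono) auto
    also have "\<dots> = (1-\<alpha>)*\<gamma>/2*(norm (xs-z))\<^sup>2 + \<alpha>*\<mu>/2*(norm (xs-y))\<^sup>2" using eta by (simp add: field_simps)
    finally show ?thesis .
  qed
  ultimately show ?thesis using lhs d0 by linarith
qed



lemma lim0:
  fixes a b :: real
  assumes "\<And>t. 0<t \<Longrightarrow> t\<le>1 \<Longrightarrow> 0 \<le> a + t*b"
  shows "0 \<le> a"
proof (rule ccontr)
  assume a: "\<not> 0 \<le> a"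
  show False
  proof (cases "b \<le> 0")
    case True thus False using assms[of 1] a by simp
  next
    case False
    define t where "t = min 1 (-a/(2*b))"
    have t0: "0 < t" "t \<le> 1" using False a by (auto simp: t_def divide_neg_pos)
    have "t*b \<le> (-a/(2*b))*b" using False by (intro mult_right_mono) (auto simp: t_def)
    also have "\<dots> = -a/2" using False by simp
    finally show False using assms[OF t0] a by linarith
  qed
qed

lemma eps_le:
  fixes A B c :: real
  assumes "\<And>e. 0<e \<Longrightarrow> A \<le> B + e*c" "c \<ge> 0"
  shows "A \<le> B"
proof (rule field_le_epsilon)
  fix e :: real assume e: "0 < e"
  have "A \<le> B + (e/(c+1))*c" using assms(1)[of "e/(c+1)"] e assms(2) by simp
  also have "(e/(c+1))*c \<le> e" using e assms(2) by (simp add: field_simps)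
  finally show "A \<le> B + e" by simp
qed

lemma sc_tangent:
  fixes g :: "'a::real_inner \<Rightarrow> real"
  assumes "(g has_derivative (\<lambda>d. D \<bullet> d)) (at y)" "strongly_convex \<mu> g"
  shows "g y + D \<bullet> (u - y) + \<mu>/2 * (norm (u-y))\<^sup>2 \<le> g u"
proof -
  have "D \<bullet> (u - y) \<le> g u - g y - \<mu>/2 * (norm (u-y))\<^sup>2"
  proof (rule tangent_le[OF assms(1), where K = "\<mu>/2 * (norm (u-y))\<^sup>2"])
    fix t :: real assume t: "0<t" "t\<le>1"
    have "g ((1 - t) *\<^sub>R y + t *\<^sub>R u) \<le> (1 - t) * g y + t * g u - \<mu> / 2 * t * (1 - t) * (norm (y - u))\<^sup>2"
      using assms(2) t unfolding strongly_convex_def by auto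
    moreover have "(1 - t) *\<^sub>R y + t *\<^sub>R u = y + t *\<^sub>R (u - y)" by (simp add: algebra_simps)
    moreover have "norm (y - u) = norm (u - y)" by (simp add: norm_minus_commute)
    ultimately have A: "g (y + t *\<^sub>R (u - y)) \<le> (1 - t) * g y + t * g u - \<mu> / 2 * t * (1 - t) * (norm (u - y))\<^sup>2"
      by simp
    have "(1 - t) * g y + t * g u - \<mu> / 2 * t * (1 - t) * (norm (u - y))\<^sup>2 = g y + t * (g u - g y - \<mu> / 2 * (norm (u - y))\<^sup>2) + t\<^sup>2 * (\<mu> / 2 * (norm (u - y))\<^sup>2)"
      by (simp add: power2_eq_square field_simps)
    with A show "g (y + t *\<^sub>R (u - y)) \<le> g y + t * (g u - g y - \<mu> / 2 * (norm (u - y))\<^sup>2) + t\<^sup>2 * (\<mu> / 2 * (norm (u - y))\<^sup>2)"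
      by simp
  qed
  thus ?thesis by simp
qed

lemma cvx_tangent:
  fixes h :: "'a::real_inner \<Rightarrow> real"
  assumes "(h has_derivative (\<lambda>d. D \<bullet> d)) (at y)" "convex_on UNIV h"
  shows "h y + D \<bullet> (u - y) \<le> h u"
proof -
  have "D \<bullet> (u - y) \<le> h u - h y"
  proof (rule tangent_le[OF assms(1), where K = 0])
    fix t :: real assume t: "0<t" "t\<le>1"
    have "h ((1 - t) *\<^sub>R y + t *\<^sub>R u) \<le> (1 - t) * h y + t * h u"
      using convex_onD[OF assms(2)] t by auto
    moreover have "(1 - t) *\<^sub>R y + t *\<^sub>R u = y + t *\<^sub>R (u - y)" by (simp add: algebra_simps)
    ultimately show "h (y + t *\<^sub>R (u - y)) \<le> h y + t * (h u - h y) + t\<^sup>2 * 0"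
      by (simp add: algebra_simps)
  qed
  thus ?thesis by simp
qed

lemma convex_fun_ineq:
  fixes r :: "'a::real_vector \<Rightarrow> ereal"
  assumes "convex_fun r" "r p = ereal a" "r u = ereal b" "0\<le>t" "t\<le>1"
  shows "r ((1-t) *\<^sub>R p + t *\<^sub>R u) \<le> ereal ((1-t)*a + t*b)"
proof -
  have "(p,a) \<in> epigraph r" "(u,b) \<in> epigraph r" using assms by (auto simp: epigraph_def)
  hence "(1-t) *\<^sub>R (p,a) + t *\<^sub>R (u,b) \<in> epigraph r"
    using assms(1,4,5) unfolding convex_fun_def by (intro convexD) auto
  thus ?thesis by (simp add: epigraph_def)
qed

lemma prox_fin:
  fixes r :: "'a::real_normed_vector \<Rightarrow> ereal"
  assumes "is_prox \<eta> r v p" "\<eta> > 0" "proper_fun r"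
  shows "r p \<noteq> \<infinity>"
proof
  assume rp: "r p = \<infinity>"
  obtain u0 where u0: "r u0 \<noteq> \<infinity>" using assms(3) by (auto simp: proper_fun_def)
  have "r u0 \<noteq> -\<infinity>" using assms(3) by (auto simp: proper_fun_def)
  then obtain b where b: "r u0 = ereal b" using u0 by (cases "r u0") auto
  have "ereal (1/2 * (norm (p - v))\<^sup>2) + ereal \<eta> * r p \<le> ereal (1/2 * (norm (u0 - v))\<^sup>2) + ereal \<eta> * r u0"
    using assms(1) unfolding is_prox_def by blast
  thus False using rp b assms(2) by simp
qed

lemma norm_sq_add:
  fixes a d :: "'a::real_inner"
  shows "(norm (a + t *\<^sub>R d))\<^sup>2 = (norm a)\<^sup>2 + 2*t*(a \<bullet> d) + t\<^sup>2 * (norm d)\<^sup>2"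
  unfolding power2_norm_eq_inner by (simp add: inner_add_left inner_add_right inner_commute power2_eq_square algebra_simps)

lemma prox_subgrad:
  fixes r :: "'a::real_inner \<Rightarrow> ereal"
  assumes px: "is_prox \<eta> r v p" and eta: "\<eta> > 0" and pr: "proper_fun r" and cv: "convex_fun r"
    and ru: "r u \<noteq> \<infinity>"
  shows "real_of_ereal (r p) + (1/\<eta>) * ((v - p) \<bullet> (u - p)) \<le> real_of_ereal (r u)"
proof -
  have nm: "\<And>x. r x \<noteq> -\<infinity>" using pr by (auto simp: proper_fun_def)
  obtain a where a: "r p = ereal a" using prox_fin[OF px eta pr] nm[of p] by (cases "r p") auto
  obtain b where b: "r u = ereal b" using ru nm[of u] by (cases "r u") auto
  define d where "d = u - p"
  have "0 \<le> (p - v) \<bullet> d + \<eta>*(b - a)"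
  proof (rule lim0[where b = "(norm d)\<^sup>2/2"])
    fix t :: real assume t: "0<t" "t\<le>1"
    define ut where "ut = (1-t) *\<^sub>R p + t *\<^sub>R u"
    have ut': "ut - v = (p - v) + t *\<^sub>R d" by (simp add: ut_def d_def algebra_simps)
    have c1: "r ut \<le> ereal ((1-t)*a + t*b)" unfolding ut_def using convex_fun_ineq[OF cv a b] t by simp
    have "ereal (1/2 * (norm (p - v))\<^sup>2) + ereal \<eta> * r p \<le> ereal (1/2 * (norm (ut - v))\<^sup>2) + ereal \<eta> * r ut"
      using px unfolding is_prox_def by blast
    also have "ereal \<eta> * r ut \<le> ereal \<eta> * ereal ((1-t)*a + t*b)"
      using c1 eta by (intro ereal_mult_left_mono) auto
    finally have "1/2 * (norm (p - v))\<^sup>2 + \<eta> * a \<le> 1/2 * (norm (ut - v))\<^sup>2 + \<eta> * ((1-t)*a + t*b)"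
      using a by (simp add: add_left_mono)
    moreover have "(norm (ut - v))\<^sup>2 = (norm (p - v))\<^sup>2 + 2*t*((p - v) \<bullet> d) + t\<^sup>2 * (norm d)\<^sup>2"
      unfolding ut' by (rule norm_sq_add)
    ultimately have "0 \<le> t * ((p - v) \<bullet> d + \<eta>*(b - a) + t * ((norm d)\<^sup>2/2))"
      by (simp add: power2_eq_square algebra_simps)
    thus "0 \<le> (p - v) \<bullet> d + \<eta>*(b - a) + t * ((norm d)\<^sup>2/2)" using t
      by (simp add: zero_le_mult_iff)
  qed
  hence "a + (1/\<eta>) * ((v - p) \<bullet> d) \<le> b" using eta
    by (simp add: field_simps inner_diff_left)
  thus ?thesis using a b d_def by simp
qed

lemma key_step:
  fixes x' y u v s Dgy :: "'a::real_inner" and gy gx' gu Hx' Hu :: real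
  assumes eta: "\<eta>>0"
    and gsc: "gy + Dgy \<bullet> (u - y) + \<mu>/2*(norm(u-y))\<^sup>2 \<le> gu"
    and gv: "gx' \<le> gy + Dgy \<bullet> (x'-y) + 1/(2*\<eta>)*(norm(x'-y))\<^sup>2"
    and hv: "Hx' + v \<bullet> (u - x') \<le> Hu"
    and sd: "s = Dgy + (1/\<eta>) *\<^sub>R (x'-y) + v"
    and ns: "norm s \<le> e"
  shows "gx' + Hx' \<le> gu + Hu + (1/\<eta>)*((x'-y) \<bullet> (u-y)) - 1/(2*\<eta>)*(norm(x'-y))\<^sup>2
            - \<mu>/2*(norm(u-y))\<^sup>2 + e*norm(u-x')"
proof -
  have vd: "v = s - Dgy - (1/\<eta>) *\<^sub>R (x'-y)" using sd by simp
  have "- (s \<bullet> (u - x')) \<le> \<bar>s \<bullet> (u - x')\<bar>" by simp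
  also have "\<dots> \<le> norm s * norm (u - x')" by (rule Cauchy_Schwarz_ineq2)
  also have "\<dots> \<le> e * norm (u - x')" using ns by (simp add: mult_right_mono)
  finally have cs: "- (s \<bullet> (u - x')) \<le> e * norm (u - x')" .
  have e1: "Dgy \<bullet> (u - x') = Dgy \<bullet> (u - y) - Dgy \<bullet> (x' - y)" by (simp add: inner_diff_right)
  have e2: "(x'-y) \<bullet> (u - x') = (x'-y) \<bullet> (u-y) - (norm(x'-y))\<^sup>2"
    by (simp add: power2_norm_eq_inner inner_diff_right)
  have e3: "v \<bullet> (u - x') = s \<bullet> (u - x') - Dgy \<bullet> (u - x') - (1/\<eta>) * ((x'-y) \<bullet> (u - x'))"
    unfolding vd by (simp add: inner_diff_left)
  have "1/(2*\<eta>)*(norm(x'-y))\<^sup>2 - (1/\<eta>)*(norm(x'-y))\<^sup>2 = - (1/(2*\<eta>)*(norm(x'-y))\<^sup>2)"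
    using eta by (simp add: field_simps)
  moreover have e4: "v \<bullet> (u - x') = s \<bullet> (u - x') - (Dgy \<bullet> (u - y) - Dgy \<bullet> (x' - y))
      - (1/\<eta>) * ((x'-y) \<bullet> (u-y)) + (1/\<eta>) * (norm(x'-y))\<^sup>2"
    using e3 unfolding e1 e2 by (simp add: right_diff_distrib)
  ultimately show ?thesis using gsc gv hv cs by linarith
qed



theorem theorem3p7:
  fixes g h :: "'a::euclidean_space \<Rightarrow> real"
    and Dg Dh :: "'a \<Rightarrow> 'a"
    and r :: "'a \<Rightarrow> ereal"
    and \<mu> Lg Lh Lbar \<gamma>dec :: real
    and xstar :: 'a
    and x z y xt :: "nat \<Rightarrow> 'a"
    and \<eta> \<alpha> \<gamma> \<epsilon> \<eta>t :: "nat \<Rightarrow> real"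
  assumes g_grad: "\<And>u. (g has_derivative (\<lambda>d. Dg u \<bullet> d)) (at u)"
    and g_sc: "strongly_convex \<mu> g"
    and mu_pos: "\<mu> > 0"
    and Lg_pos: "Lg > 0"
    and g_lip: "\<And>u v. norm (Dg u - Dg v) \<le> Lg * norm (u - v)"
    and h_grad: "\<And>u. (h has_derivative (\<lambda>d. Dh u \<bullet> d)) (at u)"
    and h_cvx: "convex_on UNIV h"
    and h_lip: "\<And>u v. norm (Dh u - Dh v) \<le> Lh * norm (u - v)"
    and r_proper: "proper_fun r" and r_closed: "closed_fun r" and r_convex: "convex_fun r"
    and xstar_min: "\<And>u. ereal (g xstar) + ereal (h xstar) + r xstar \<le> ereal (g u) + ereal (h u) + r u"
    and gdec: "0 < \<gamma>dec" "\<gamma>dec < 1"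
    and Lbar: "Lbar > 0" "\<mu> \<le> Lbar" "Lbar \<le> Lg"
    and init: "x 0 = z 0" "r (x 0) \<noteq> \<infinity>"
    and gamma0: "\<gamma> 0 \<ge> \<mu>"
    and pos: "\<And>k. \<eta> k > 0" "\<And>k. \<alpha> k > 0" "\<And>k. \<gamma> k > 0"
    and eps0: "\<And>k. \<epsilon> k = 0"
    and step_i: "\<And>k. \<gamma>dec / Lg < \<eta> k \<and> \<eta> k \<le> 1 / Lbar"
    and step_ii: "\<And>k. \<gamma> (Suc k) = (\<alpha> k)\<^sup>2 / \<eta> k \<and> (\<alpha> k)\<^sup>2 / \<eta> k = (1 - \<alpha> k) * \<gamma> k + \<alpha> k * \<mu>"
    and step_iii: "\<And>k. y k = (1 / (\<alpha> k * \<gamma> k + \<gamma> (Suc k))) *\<^sub>R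
                              ((\<alpha> k * \<gamma> k) *\<^sub>R z k + \<gamma> (Suc k) *\<^sub>R x k)"
    and step_iv: "\<And>k. dist0 ((\<lambda>v. Dg (y k) + (1 / \<eta> k) *\<^sub>R (x (Suc k) - y k) + v)
                              ` subdiff (\<lambda>u. ereal (h u) + r u) (x (Suc k))) \<le> ereal (\<epsilon> k)"
    and step_v: "\<And>k. g (x (Suc k)) \<le> g (y k) + Dg (y k) \<bullet> (x (Suc k) - y k)
                              + 1 / (2 * \<eta> k) * (norm (x (Suc k) - y k))\<^sup>2"
    and step_vi: "\<And>k. z (Suc k) = x k + (1 / \<alpha> k) *\<^sub>R (x (Suc k) - x k)"
    and etat: "\<And>k. \<gamma>dec / (Lg + Lh) < \<eta>t k \<and> \<eta>t k \<le> 1 / Lbar"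
    and xt_prox: "\<And>k. is_prox (\<eta>t k) r (x k - \<eta>t k *\<^sub>R (Dg (x k) + Dh (x k))) (xt k)"
    and xt_desc: "\<And>k. g (xt k) + h (xt k) \<le> g (x k) + h (x k)
                     + (Dg (x k) + Dh (x k)) \<bullet> (xt k - x k) + 1 / (2 * \<eta>t k) * (norm (xt k - x k))\<^sup>2"
  shows "\<forall>k. dist0 (subdiff (\<lambda>u. ereal (g u) + ereal (h u) + r u) (xt k)) \<le>
    ereal (((Lg + Lh) / sqrt Lbar + sqrt ((Lg + Lh) / \<gamma>dec))
      * sqrt (2 * (real_of_ereal (ereal (g (x 0)) + ereal (h (x 0)) + r (x 0))
                   - real_of_ereal (ereal (g xstar) + ereal (h xstar) + r xstar)
                   + \<gamma> 0 / 2 * (norm (xstar - z 0))\<^sup>2))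
      * (1 - sqrt (1 / (Lg / (\<gamma>dec * \<mu>)))) powr (real k / 2))"
proof -
  define R where "R u = real_of_ereal (r u)" for u
  define Fr where "Fr u = g u + h u + R u" for u
  have nm: "\<And>u. r u \<noteq> -\<infinity>" using r_proper by (auto simp: proper_fun_def)
  have fe: "\<And>u. r u \<noteq> \<infinity> \<Longrightarrow> r u = ereal (R u)"
    using nm unfolding R_def by (case_tac "r u") auto
  have Fe: "ereal (g u) + ereal (h u) + r u = ereal (Fr u)" if "r u \<noteq> \<infinity>" for u
    using fe[OF that] unfolding Fr_def by simp
  have Lh0: "Lh \<ge> 0"
  proof -
    obtain b :: 'a where b: "b \<in> Basis" using nonempty_Basis by blast
    have nb: "norm b > 0" using b nonzero_Basis by auto
    have "0 \<le> Lh * norm (b - 0)" by (rule order_trans[OF norm_ge_zero h_lip])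
    thus ?thesis using nb by (simp add: zero_le_mult_iff)
  qed
  have rxs: "r xstar \<noteq> \<infinity>"
  proof
    assume "r xstar = \<infinity>"
    hence "ereal (g xstar) + ereal (h xstar) + r xstar = \<infinity>" by simp
    thus False using xstar_min[of "x 0"] Fe[OF init(2)] by simp
  qed
  define Fs where "Fs = Fr xstar"
  have Fs_le: "\<And>u. r u \<noteq> \<infinity> \<Longrightarrow> Fs \<le> Fr u"
  proof -
    fix u assume "r u \<noteq> \<infinity>"
    hence "ereal (Fr xstar) \<le> ereal (Fr u)" using xstar_min[of u] Fe rxs by simp
    thus "Fs \<le> Fr u" unfolding Fs_def by simp
  qed
  have step: "r (x (Suc k)) \<noteq> \<infinity> \<and> (\<forall>u. r u \<noteq> \<infinity> \<longrightarrow> Fr (x (Suc k)) \<le> Fr u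
      + (1/\<eta> k)*((x (Suc k) - y k) \<bullet> (u - y k)) - 1/(2*\<eta> k)*(norm(x (Suc k) - y k))\<^sup>2
      - \<mu>/2*(norm(u - y k))\<^sup>2)" for k
  proof -
    let ?x' = "x (Suc k)" and ?y = "y k"
    let ?H = "\<lambda>u. ereal (h u) + r u"
    let ?f = "\<lambda>v. Dg ?y + (1 / \<eta> k) *\<^sub>R (?x' - ?y) + v"
    have ex: "\<exists>v\<in>subdiff ?H ?x'. norm (?f v) < e" if e: "e > 0" for e
    proof -
      have "dist0 (?f ` subdiff ?H ?x') \<le> ereal 0" using step_iv[of k] eps0[of k] by simp
      also have "ereal 0 < ereal e" using e by simp
      finally have "dist0 (?f ` subdiff ?H ?x') < ereal e" .
      hence "\<exists>s\<in>?f ` subdiff ?H ?x'. ereal (norm s) < ereal e" unfolding dist0_def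
        by (simp add: INF_less_iff)
      thus ?thesis by auto
    qed
    obtain v1 where "v1 \<in> subdiff ?H ?x'" using ex[of 1] by auto
    hence "\<bar>?H ?x'\<bar> \<noteq> \<infinity>" by (simp add: subdiff_def)
    hence rx': "r ?x' \<noteq> \<infinity>" by auto
    show ?thesis
    proof (intro conjI allI impI rx')
      fix u assume ru: "r u \<noteq> \<infinity>"
      show "Fr ?x' \<le> Fr u + (1/\<eta> k)*((?x' - ?y) \<bullet> (u - ?y)) - 1/(2*\<eta> k)*(norm(?x' - ?y))\<^sup>2
           - \<mu>/2*(norm(u - ?y))\<^sup>2"
      proof (rule eps_le[where c = "norm (u - ?x')"])
        fix e :: real assume e: "0 < e"
        obtain v where v: "v \<in> subdiff ?H ?x'" and nv: "norm (?f v) < e" using ex[OF e] by auto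
        have "?H ?x' + ereal (v \<bullet> (u - ?x')) \<le> ?H u" using v by (simp add: subdiff_def)
        hence hv: "(h ?x' + R ?x') + v \<bullet> (u - ?x') \<le> h u + R u"
          using fe[OF rx'] fe[OF ru] by simp
        have "g ?x' + (h ?x' + R ?x') \<le> g u + (h u + R u) + (1/\<eta> k)*((?x' - ?y) \<bullet> (u - ?y))
            - 1/(2*\<eta> k)*(norm(?x' - ?y))\<^sup>2 - \<mu>/2*(norm(u - ?y))\<^sup>2 + e*norm(u - ?x')"
          by (rule key_step[OF pos(1) sc_tangent[OF g_grad g_sc] step_v hv refl]) (use nv in simp)
        thus "Fr ?x' \<le> Fr u + (1/\<eta> k)*((?x' - ?y) \<bullet> (u - ?y)) - 1/(2*\<eta> k)*(norm(?x' - ?y))\<^sup>2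
           - \<mu>/2*(norm(u - ?y))\<^sup>2 + e * norm (u - ?x')" unfolding Fr_def by simp
      qed simp
    qed
  qed
  have rx: "r (x k) \<noteq> \<infinity>" for k using init(2) step by (cases k) auto
  have a1: "\<alpha> k \<le> 1" if gm: "\<mu> \<le> \<gamma> k" for k
  proof (rule ccontr)
    assume "\<not> \<alpha> k \<le> 1"
    hence a: "\<alpha> k > 1" by simp
    have "\<alpha> k * (\<gamma> k - \<mu>) \<ge> 1 * (\<gamma> k - \<mu>)" using a gm by (intro mult_right_mono) auto
    hence "(1 - \<alpha> k) * \<gamma> k + \<alpha> k * \<mu> \<le> \<mu>" by (simp add: algebra_simps)
    hence "(\<alpha> k)\<^sup>2 / \<eta> k \<le> \<mu>" using step_ii[of k] by simp
    hence "(\<alpha> k)\<^sup>2 \<le> \<mu> * \<eta> k" using pos(1)[of k] by (simp add: divide_le_eq mult.commute)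
    also have "\<dots> \<le> \<mu> * (1/Lbar)" using step_i[of k] mu_pos by (intro mult_left_mono) auto
    also have "\<dots> \<le> 1" using Lbar by (simp add: divide_le_eq)
    finally have "(\<alpha> k)\<^sup>2 \<le> 1" .
    moreover have "1 < (\<alpha> k)\<^sup>2" using a by (simp add: one_less_power)
    ultimately show False by simp
  qed
  have gm: "\<mu> \<le> \<gamma> k" for k
  proof (induction k)
    case 0 show ?case using gamma0 .
  next
    case (Suc k)
    have "0 \<le> (1 - \<alpha> k) * (\<gamma> k - \<mu>)" using a1[OF Suc] Suc by simp
    thus ?case using step_ii[of k] by (simp add: algebra_simps)
  qed
  have al1: "\<alpha> k \<le> 1" for k using a1[OF gm] .
  define q where "q = 1 - sqrt (1 / (Lg / (\<gamma>dec * \<mu>)))"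
  have ik: "1 / (Lg / (\<gamma>dec * \<mu>)) = \<gamma>dec * \<mu> / Lg" by simp
  have ik1: "\<gamma>dec * \<mu> / Lg < 1"
  proof -
    have "\<gamma>dec * \<mu> < 1 * Lg" using gdec mu_pos Lbar by (intro mult_strict_right_mono[THEN less_le_trans]) auto
    thus ?thesis using Lg_pos by (simp add: divide_less_eq)
  qed
  have ik0: "0 < \<gamma>dec * \<mu> / Lg" using gdec mu_pos Lg_pos by simp
  have q0: "0 < q" using ik1 ik0 unfolding q_def ik by simp
  have qa: "1 - \<alpha> k \<le> q" for k
  proof -
    have "\<gamma>dec / Lg * \<mu> < \<eta> k * \<mu>" using step_i[of k] mu_pos by (intro mult_strict_right_mono) auto
    also have "\<eta> k * \<mu> \<le> \<eta> k * \<gamma> (Suc k)" using gm[of "Suc k"] pos(1)[of k] by simp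
    also have "\<dots> = (\<alpha> k)\<^sup>2" using step_ii[of k] pos(1)[of k] by (simp add: field_simps)
    finally have "\<gamma>dec * \<mu> / Lg \<le> (\<alpha> k)\<^sup>2" by simp
    hence "sqrt (\<gamma>dec * \<mu> / Lg) \<le> sqrt ((\<alpha> k)\<^sup>2)" by (rule real_sqrt_le_mono)
    hence "sqrt (\<gamma>dec * \<mu> / Lg) \<le> \<alpha> k" using pos(2)[of k] by simp
    thus ?thesis unfolding q_def ik by simp
  qed
  define \<Phi> where "\<Phi> k = Fr (x k) - Fs + \<gamma> k / 2 * (norm (xstar - z k))\<^sup>2" for k
  have \<Phi>0: "\<Phi> k \<ge> 0" for k
    using Fs_le[OF rx[of k]] pos(3)[of k] unfolding \<Phi>_def by simp
  have \<Phi>step: "\<Phi> (Suc k) \<le> (1 - \<alpha> k) * \<Phi> k" for k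
  proof -
    let ?x' = "x (Suc k)" and ?y = "y k" and ?a = "\<alpha> k" and ?e = "\<eta> k"
    define A where "A = (1/?e)*((?x'-?y) \<bullet> (x k-?y)) - 1/(2*?e)*(norm(?x'-?y))\<^sup>2 - \<mu>/2*(norm(x k-?y))\<^sup>2"
    define B where "B = (1/?e)*((?x'-?y) \<bullet> (xstar-?y)) - 1/(2*?e)*(norm(?x'-?y))\<^sup>2 - \<mu>/2*(norm(xstar-?y))\<^sup>2"
    have hA: "Fr ?x' \<le> Fr (x k) + A" using step[of k] rx[of k] unfolding A_def by auto
    have hB: "Fr ?x' \<le> Fs + B" using step[of k] rxs unfolding B_def Fs_def by auto
    have L: "(1-?a)*A + ?a*B \<le> (1-?a)*\<gamma> k/2*(norm(xstar - z k))\<^sup>2 - \<gamma> (Suc k)/2*(norm(xstar - z (Suc k)))\<^sup>2"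
      unfolding A_def B_def
      by (rule lyap_alg[OF pos(1) pos(2) al1 pos(3) less_imp_le[OF mu_pos]])
         (use step_ii[of k] step_iii[of k] step_vi[of k] in auto)
    have "(1-?a) * Fr ?x' \<le> (1-?a) * (Fr (x k) + A)" using hA al1[of k] by (intro mult_left_mono) auto
    moreover have "?a * Fr ?x' \<le> ?a * (Fs + B)" using hB pos(2)[of k] by (intro mult_left_mono) auto
    ultimately have "Fr ?x' \<le> (1-?a) * (Fr (x k) + A) + ?a * (Fs + B)" by (simp add: algebra_simps)
    moreover have "\<Phi> (Suc k) - (1 - ?a) * \<Phi> k = (Fr ?x' - ((1-?a) * (Fr (x k) + A) + ?a * (Fs + B)))
        + (((1-?a)*A + ?a*B) - ((1-?a)*\<gamma> k/2*(norm(xstar - z k))\<^sup>2 - \<gamma> (Suc k)/2*(norm(xstar - z (Suc k)))\<^sup>2))"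
      unfolding \<Phi>_def by (simp add: algebra_simps)
    ultimately show ?thesis using L by linarith
  qed
  have \<Phi>bound: "\<Phi> k \<le> q^k * \<Phi> 0" for k
  proof (induction k)
    case 0 show ?case by simp
  next
    case (Suc k)
    have "\<Phi> (Suc k) \<le> (1 - \<alpha> k) * \<Phi> k" by (rule \<Phi>step)
    also have "\<dots> \<le> q * \<Phi> k" using qa[of k] \<Phi>0[of k] by (intro mult_right_mono) auto
    also have "\<dots> \<le> q * (q^k * \<Phi> 0)" using Suc q0 by (intro mult_left_mono) auto
    finally show ?case by simp
  qed
  define L where "L = Lg + Lh"
  have Lpos: "L > 0" using Lg_pos Lh0 unfolding L_def by simp
  show ?thesis
  proof
    fix k
    let ?p = "xt k" and ?xk = "x k" and ?t = "\<eta>t k"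
    let ?G = "Dg ?xk + Dh ?xk"
    let ?v0 = "?xk - ?t *\<^sub>R ?G"
    let ?F = "\<lambda>u. ereal (g u) + ereal (h u) + r u"
    have t0: "?t > 0" using etat[of k] gdec Lpos unfolding L_def[symmetric]
      by (meson divide_pos_pos less_trans)
    have rp: "r ?p \<noteq> \<infinity>" by (rule prox_fin[OF xt_prox t0 r_proper])
    define s where "s = Dg ?p + Dh ?p + (1/?t) *\<^sub>R (?v0 - ?p)"
    have s_in: "s \<in> subdiff ?F ?p"
      unfolding subdiff_def
    proof (intro CollectI conjI allI)
      show "\<bar>?F ?p\<bar> \<noteq> \<infinity>" using Fe[OF rp] by simp
      fix u
      show "?F ?p + ereal (s \<bullet> (u - ?p)) \<le> ?F u"
      proof (cases "r u = \<infinity>")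
        case True thus ?thesis by simp
      next
        case False
        have g1: "g ?p + Dg ?p \<bullet> (u - ?p) + \<mu>/2 * (norm (u - ?p))\<^sup>2 \<le> g u" by (rule sc_tangent[OF g_grad g_sc])
        have h1: "h ?p + Dh ?p \<bullet> (u - ?p) \<le> h u" by (rule cvx_tangent[OF h_grad h_cvx])
        have r1: "R ?p + (1/?t) * ((?v0 - ?p) \<bullet> (u - ?p)) \<le> R u"
          using prox_subgrad[OF xt_prox t0 r_proper r_convex False] unfolding R_def .
        have "\<mu>/2 * (norm (u - ?p))\<^sup>2 \<ge> 0" using mu_pos by simp
        hence "Fr ?p + s \<bullet> (u - ?p) \<le> Fr u" using g1 h1 r1 unfolding Fr_def s_def
          by (simp add: inner_add_left)
        thus ?thesis using Fe[OF rp] Fe[OF False] by simp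
      qed
    qed
    have d1: "dist0 (subdiff ?F ?p) \<le> ereal (norm s)" unfolding dist0_def
      using s_in by (rule INF_lower)
    have s_eq: "s = (Dg ?p - Dg ?xk) + (Dh ?p - Dh ?xk) + (1/?t) *\<^sub>R (?xk - ?p)"
      unfolding s_def using t0 by (simp add: algebra_simps)
    have ns: "norm s \<le> (L + 1/?t) * norm (?p - ?xk)"
    proof -
      have "norm s \<le> norm (Dg ?p - Dg ?xk) + norm (Dh ?p - Dh ?xk) + norm ((1/?t) *\<^sub>R (?xk - ?p))"
        unfolding s_eq by (meson norm_triangle_ineq order_trans add_right_mono)
      also have "\<dots> \<le> Lg * norm (?p - ?xk) + Lh * norm (?p - ?xk) + (1/?t) * norm (?p - ?xk)"
        using g_lip[of ?p ?xk] h_lip[of ?p ?xk] t0 by (simp add: norm_minus_commute)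
      finally show ?thesis unfolding L_def by (simp add: algebra_simps)
    qed
    have nsq: "(norm (?p - ?xk))\<^sup>2 \<le> 2 * ?t * \<Phi> k"
    proof -
      have d: "g ?p + h ?p \<le> g ?xk + h ?xk + ?G \<bullet> (?p - ?xk) + 1/(2*?t) * (norm (?p - ?xk))\<^sup>2"
        using xt_desc[of k] .
      have r2: "R ?p + (1/?t) * ((?v0 - ?p) \<bullet> (?xk - ?p)) \<le> R ?xk"
        using prox_subgrad[OF xt_prox t0 r_proper r_convex rx[of k]] unfolding R_def .
      have ip: "(1/?t) * ((?v0 - ?p) \<bullet> (?xk - ?p)) = (1/?t) * (norm (?p - ?xk))\<^sup>2 - ?G \<bullet> (?xk - ?p)"
      proof -
        have "(?v0 - ?p) \<bullet> (?xk - ?p) = (?xk - ?p) \<bullet> (?xk - ?p) - ?t * (?G \<bullet> (?xk - ?p))"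
          by (simp add: inner_diff_left)
        thus ?thesis using t0 by (simp add: power2_norm_eq_inner norm_minus_commute field_simps)
      qed
      have gg: "?G \<bullet> (?p - ?xk) = - (?G \<bullet> (?xk - ?p))" by (simp add: inner_diff_right)
      have "Fr ?p \<le> Fr ?xk - 1/(2*?t) * (norm (?p - ?xk))\<^sup>2"
      proof -
        have "1/(2*?t) * (norm (?p - ?xk))\<^sup>2 - (1/?t) * (norm (?p - ?xk))\<^sup>2 = - (1/(2*?t) * (norm (?p - ?xk))\<^sup>2)"
          using t0 by (simp add: field_simps)
        thus ?thesis using d r2 ip gg unfolding Fr_def by linarith
      qed
      moreover have "Fs \<le> Fr ?p" using Fs_le[OF rp] .
      moreover have "0 \<le> \<gamma> k / 2 * (norm (xstar - z k))\<^sup>2" using pos(3)[of k] by simp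
      ultimately have "1/(2*?t) * (norm (?p - ?xk))\<^sup>2 \<le> \<Phi> k" unfolding \<Phi>_def by linarith
      thus ?thesis using t0 by (simp add: field_simps)
    qed
    have \<Phi>nn: "0 \<le> \<Phi> 0" by (rule \<Phi>0)
    have "norm (?p - ?xk) \<le> sqrt (2 * ?t * \<Phi> k)"
      using nsq by (simp add: real_le_rsqrt)
    also have "\<dots> \<le> sqrt (2 * ?t * (q^k * \<Phi> 0))"
      using \<Phi>bound[of k] t0 by (intro real_sqrt_le_mono mult_left_mono) auto
    also have "\<dots> = sqrt ?t * (sqrt (2 * \<Phi> 0) * sqrt (q^k))"
    proof -
      have "2 * ?t * (q^k * \<Phi> 0) = ?t * ((2 * \<Phi> 0) * q^k)" by simp
      thus ?thesis by (simp only: real_sqrt_mult)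
    qed
    finally have np: "norm (?p - ?xk) \<le> sqrt ?t * (sqrt (2 * \<Phi> 0) * sqrt (q^k))" .
    have c1: "(L + 1/?t) * sqrt ?t \<le> L / sqrt Lbar + sqrt (L / \<gamma>dec)"
    proof -
      have st: "sqrt ?t > 0" using t0 by simp
      have e: "(L + 1/?t) * sqrt ?t = L * sqrt ?t + 1 / sqrt ?t"
        using st t0 by (simp add: field_simps)
      have "sqrt ?t \<le> sqrt (1/Lbar)" using etat[of k] by (intro real_sqrt_le_mono) auto
      hence "sqrt ?t \<le> 1 / sqrt Lbar" by (simp add: real_sqrt_divide)
      hence "L * sqrt ?t \<le> L * (1 / sqrt Lbar)" using Lpos by (intro mult_left_mono) auto
      hence e1: "L * sqrt ?t \<le> L / sqrt Lbar" by simp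
      have "1/?t < L/\<gamma>dec"
      proof -
        have "\<gamma>dec / L < ?t" using etat[of k] unfolding L_def by simp
        thus ?thesis using t0 gdec Lpos by (simp add: field_simps)
      qed
      hence "sqrt (1/?t) \<le> sqrt (L/\<gamma>dec)" by simp
      hence e2: "1 / sqrt ?t \<le> sqrt (L/\<gamma>dec)" by (simp add: real_sqrt_divide)
      show ?thesis using e e1 e2 by simp
    qed
    have qk: "sqrt (q^k) = q powr (real k / 2)"
    proof -
      have "q powr (real k / 2) = (q powr real k) powr (1/2)" using q0 by (simp add: powr_powr)
      also have "\<dots> = sqrt (q^k)" using q0 by (simp add: powr_realpow powr_half_sqrt)
      finally show ?thesis by simp
    qed
    have "norm s \<le> (L + 1/?t) * (sqrt ?t * (sqrt (2 * \<Phi> 0) * sqrt (q^k)))"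
    proof -
      have "0 \<le> L + 1/?t" using t0 Lpos by simp
      hence "(L + 1/?t) * norm (?p - ?xk) \<le> (L + 1/?t) * (sqrt ?t * (sqrt (2 * \<Phi> 0) * sqrt (q^k)))"
        by (rule mult_left_mono[OF np])
      thus ?thesis using ns by linarith
    qed
    also have "\<dots> = ((L + 1/?t) * sqrt ?t) * (sqrt (2 * \<Phi> 0) * sqrt (q^k))" by simp
    also have "\<dots> \<le> (L / sqrt Lbar + sqrt (L / \<gamma>dec)) * (sqrt (2 * \<Phi> 0) * sqrt (q^k))"
      using c1 \<Phi>nn q0 by (intro mult_right_mono) auto
    finally have fin: "norm s \<le> (L / sqrt Lbar + sqrt (L / \<gamma>dec)) * sqrt (2 * \<Phi> 0) * q powr (real k / 2)"
      unfolding qk by (simp add: mult.assoc)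
    have P0: "real_of_ereal (ereal (g (x 0)) + ereal (h (x 0)) + r (x 0))
                   - real_of_ereal (ereal (g xstar) + ereal (h xstar) + r xstar)
                   + \<gamma> 0 / 2 * (norm (xstar - z 0))\<^sup>2 = \<Phi> 0"
      unfolding \<Phi>_def Fs_def using Fe[OF init(2)] Fe[OF rxs] by simp
    show "dist0 (subdiff ?F ?p) \<le> ereal (((Lg + Lh) / sqrt Lbar + sqrt ((Lg + Lh) / \<gamma>dec))
      * sqrt (2 * (real_of_ereal (ereal (g (x 0)) + ereal (h (x 0)) + r (x 0))
                   - real_of_ereal (ereal (g xstar) + ereal (h xstar) + r xstar)
                   + \<gamma> 0 / 2 * (norm (xstar - z 0))\<^sup>2))
      * (1 - sqrt (1 / (Lg / (\<gamma>dec * \<mu>)))) powr (real k / 2))"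
      unfolding P0 using d1 fin unfolding L_def q_def by (meson ereal_less_eq(3) order_trans)
  qed
qed

end
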